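(* Let $I=(\mathcal{M},[N],(d_i)_{i\in[N]})$ be a non-positive instance, $\lambda\ge0$ and $\varepsilon>0$, and suppose the $\lambda$-max-min problem for $I$ has a solution. Set $u_i:=-d_i$. Let $\alpha>1$, $\beta>1$ with $\alpha\beta<1+\varepsilon$. For each $i$ let $c_i$ be any real number with $mMS_{u_i}^N(\mathcal{M})\le c_i\le\alpha\cdot mMS_{u_i}^N(\mathcal{M})$, and define the additive function $u_i'$ by $u_i'(j):=u_i(j)/c_i$ if $c_i>0$ and $u_i'\equiv0$ if $c_i=0$. Let $\lambda^*:=\min_{(S_1,\dots,S_N)\in\Pi_N(\mathcal{M})}\max_{i}u_i'(S_i)$, and let $S^\varepsilon=(S^\varepsilon_1,\dots,S^\varepsilon_N)\in\Pi_N(\mathcal{M})$ be any allocation with $u_i'(S^\varepsilon_i)\le\beta\lambda^*$ for all $i\in[N]$. Then $S^\varepsilon$ is a solution of the $((1+\varepsilon)\lambda)$-max-min problem for $I$, i.e. $d_i(S^\varepsilon_i)\ge(1+\varepsilon)\lambda\cdot MmS_{d_i}^N(\mathcal{M})$ for all $i\in[N]$.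
   Context: A non-positive instance: finite item set $\mathcal{M}$, agents $[N]=\{1,\dots,N\}$, additive utilities $d_i$ with $d_i(j)\le0$. $\Pi_N(\mathcal{M})$ is the set of ordered $N$-partitions of $\mathcal{M}$ (parts may be empty). $MmS_{v}^N(\mathcal{M}):=\max_{(S_1,\ldots,S_N)\in\Pi_N(\mathcal{M})}\min_{j} v(S_j)$, $mMS_{v}^N(\mathcal{M}):=\min_{(S_1,\ldots,S_N)\in\Pi_N(\mathcal{M})}\max_{j} v(S_j)$. An allocation $S$ solves the $\mu$-max-min problem for $I$ iff $d_i(S_i)\ge\mu\cdot MmS_{d_i}^N(\mathcal{M})$ for all $i$. *)

theory Defs
  imports Complex_Main
begin

text \<open>Ordered N-partitions of M, agents indexed by {1..N}; an allocation is a function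
  S :: nat => 'a set that is empty outside {1..N}.\<close>
definition partitions :: "nat \<Rightarrow> 'a set \<Rightarrow> (nat \<Rightarrow> 'a set) set" where
  "partitions N M = {S. (\<forall>i\<in>{1..N}. S i \<subseteq> M) \<and> (\<Union>i\<in>{1..N}. S i) = M
      \<and> (\<forall>i\<in>{1..N}. \<forall>k\<in>{1..N}. i \<noteq> k \<longrightarrow> S i \<inter> S k = {})
      \<and> (\<forall>i. i \<notin> {1..N} \<longrightarrow> S i = {})}"

definition val :: "('a \<Rightarrow> real) \<Rightarrow> 'a set \<Rightarrow> real" where
  "val v A = (\<Sum>j\<in>A. v j)"

definition MmS :: "('a \<Rightarrow> real) \<Rightarrow> nat \<Rightarrow> 'a set \<Rightarrow> real" where
  "MmS v N M = Max ((\<lambda>S. Min ((\<lambda>j. val v (S j)) ` {1..N})) ` partitions N M)"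

definition mMS :: "('a \<Rightarrow> real) \<Rightarrow> nat \<Rightarrow> 'a set \<Rightarrow> real" where
  "mMS v N M = Min ((\<lambda>S. Max ((\<lambda>j. val v (S j)) ` {1..N})) ` partitions N M)"

definition solves_maxmin :: "real \<Rightarrow> nat \<Rightarrow> 'a set \<Rightarrow> (nat \<Rightarrow> 'a \<Rightarrow> real) \<Rightarrow> (nat \<Rightarrow> 'a set) \<Rightarrow> bool" where
  "solves_maxmin \<mu> N M d S \<longleftrightarrow> S \<in> partitions N M \<and>
     (\<forall>i\<in>{1..N}. val (d i) (S i) \<ge> \<mu> * MmS (d i) N M)"

end

theory Submission
  imports Defs "HOL-Library.FuncSet"
begin

lemma fin_part: assumes "finite M" shows "finite (partitions N M)"
proof -
  have "partitions N M \<subseteq> (\<lambda>f i. if i \<in> {1..N} then f i else {}) ` (Pi\<^sub>E {1..N} (\<lambda>_. Pow M))"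
  proof
    fix S assume S: "S \<in> partitions N M"
    have "S = (\<lambda>i. if i \<in> {1..N} then restrict S {1..N} i else {})"
      using S unfolding partitions_def by (auto simp: fun_eq_iff restrict_def)
    moreover have "restrict S {1..N} \<in> Pi\<^sub>E {1..N} (\<lambda>_. Pow M)"
      using S unfolding partitions_def by auto
    ultimately show "S \<in> (\<lambda>f i. if i \<in> {1..N} then f i else {}) ` (Pi\<^sub>E {1..N} (\<lambda>_. Pow M))"
      by blast
  qed
  moreover have "finite (Pi\<^sub>E {1..N} (\<lambda>_. Pow M))" using assms by (simp add: finite_PiE)
  ultimately show ?thesis using finite_subset by blast
qed

lemma val_neg: "val (\<lambda>j. - d j) A = - val d A"
  unfolding val_def by (simp add: sum_negf)

theorem theorem2:
  fixes M :: "'a set" and N :: nat and d :: "nat \<Rightarrow> 'a \<Rightarrow> real"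
    and lam eps \<alpha> \<beta> :: real and c :: "nat \<Rightarrow> real" and Seps :: "nat \<Rightarrow> 'a set"
  assumes finM: "finite M" and N1: "N \<ge> 1"
    and nonpos: "\<forall>i\<in>{1..N}. \<forall>j\<in>M. d i j \<le> 0"
    and lam: "lam \<ge> 0" and eps: "eps > 0"
    and sol: "\<exists>S. solves_maxmin lam N M d S"
    and alpha: "\<alpha> > 1" and beta: "\<beta> > 1" and ab: "\<alpha> * \<beta> < 1 + eps"
    and c_bounds: "\<forall>i\<in>{1..N}. mMS (\<lambda>j. - d i j) N M \<le> c i \<and> c i \<le> \<alpha> * mMS (\<lambda>j. - d i j) N M"
    and Seps_part: "Seps \<in> partitions N M"
    and Seps_bound: "\<forall>i\<in>{1..N}.
        val (\<lambda>j. if c i > 0 then - d i j / c i else 0) (Seps i)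
        \<le> \<beta> * Min ((\<lambda>S. Max ((\<lambda>k. val (\<lambda>j. if c k > 0 then - d k j / c k else 0) (S k)) ` {1..N}))
                     ` partitions N M)"
  shows "solves_maxmin ((1 + eps) * lam) N M d Seps"
proof -
  obtain S0 where S0: "solves_maxmin lam N M d S0" using sol by blast
  have S0p: "S0 \<in> partitions N M" using S0 unfolding solves_maxmin_def by blast
  have finP: "finite (partitions N M)" using fin_part[OF finM] .
  have neP: "partitions N M \<noteq> {}" using S0p by blast
  have finI: "finite {1..N}" and neI: "{1..N} \<noteq> {}" using N1 by auto
  define m where "m i = mMS (\<lambda>j. - d i j) N M" for i
  define u' where "u' k = (\<lambda>j. if c k > 0 then - d k j / c k else 0)" for k
  define lstar where "lstar = Min ((\<lambda>S. Max ((\<lambda>k. val (u' k) (S k)) ` {1..N})) ` partitions N M)"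
  have subM: "T i \<subseteq> M" if "T \<in> partitions N M" "i \<in> {1..N}" for T i
    using that unfolding partitions_def by blast
  have finT: "finite (T i)" if "T \<in> partitions N M" "i \<in> {1..N}" for T i
    using subM[OF that] finM finite_subset by blast
  have MmS_ge: "MmS (d i) N M \<ge> - m i" if i: "i \<in> {1..N}" for i
  proof -
    have "m i \<in> (\<lambda>S. Max ((\<lambda>j. val (\<lambda>j. - d i j) (S j)) ` {1..N})) ` partitions N M"
      unfolding m_def mMS_def using finP neP by (intro Min_in) auto
    then obtain T where T: "T \<in> partitions N M" and mT: "m i = Max ((\<lambda>j. val (\<lambda>j. - d i j) (T j)) ` {1..N})"
      by blast
    have "Min ((\<lambda>j. val (d i) (T j)) ` {1..N}) \<in> (\<lambda>j. val (d i) (T j)) ` {1..N}"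
      using finI neI by (intro Min_in) auto
    then obtain k where k: "k \<in> {1..N}" and "Min ((\<lambda>j. val (d i) (T j)) ` {1..N}) = val (d i) (T k)" by blast
    moreover have "val (\<lambda>j. - d i j) (T k) \<le> m i" unfolding mT using k finI by (intro Max_ge) auto
    moreover have "Min ((\<lambda>j. val (d i) (T j)) ` {1..N}) \<le> MmS (d i) N M"
      unfolding MmS_def using finP T by (intro Max_ge) auto
    ultimately show ?thesis using val_neg[of "d i" "T k"] by linarith
  qed
  have MmS_le: "MmS (d i) N M \<le> - m i" if i: "i \<in> {1..N}" for i
  proof -
    have "MmS (d i) N M \<in> (\<lambda>S. Min ((\<lambda>j. val (d i) (S j)) ` {1..N})) ` partitions N M"
      unfolding MmS_def using finP neP by (intro Max_in) auto
    then obtain T where T: "T \<in> partitions N M" and mT: "MmS (d i) N M = Min ((\<lambda>j. val (d i) (T j)) ` {1..N})"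
      by blast
    have "Max ((\<lambda>j. val (\<lambda>j. - d i j) (T j)) ` {1..N}) \<in> (\<lambda>j. val (\<lambda>j. - d i j) (T j)) ` {1..N}"
      using finI neI by (intro Max_in) auto
    then obtain k where k: "k \<in> {1..N}" and "Max ((\<lambda>j. val (\<lambda>j. - d i j) (T j)) ` {1..N}) = val (\<lambda>j. - d i j) (T k)" by blast
    moreover have "MmS (d i) N M \<le> val (d i) (T k)" unfolding mT using k finI by (intro Min_le) auto
    moreover have "m i \<le> Max ((\<lambda>j. val (\<lambda>j. - d i j) (T j)) ` {1..N})"
      unfolding m_def mMS_def using finP T by (intro Min_le) auto
    ultimately show ?thesis using val_neg[of "d i" "T k"] by linarith
  qed
  have uS_nonneg: "val (\<lambda>j. - d i j) A \<ge> 0" if "i \<in> {1..N}" "A \<subseteq> M" for i A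
    unfolding val_def using nonpos that by (intro sum_nonneg) auto
  have m_nonneg: "m i \<ge> 0" if i: "i \<in> {1..N}" for i
  proof -
    have "m i \<in> (\<lambda>S. Max ((\<lambda>j. val (\<lambda>j. - d i j) (S j)) ` {1..N})) ` partitions N M"
      unfolding m_def mMS_def using finP neP by (intro Min_in) auto
    then obtain T where T: "T \<in> partitions N M" and mT: "m i = Max ((\<lambda>j. val (\<lambda>j. - d i j) (T j)) ` {1..N})"
      by blast
    have "val (\<lambda>j. - d i j) (T 1) \<le> m i" unfolding mT using N1 finI by (intro Max_ge) auto
    moreover have "val (\<lambda>j. - d i j) (T 1) \<ge> 0" using uS_nonneg[OF i subM[OF T]] N1 by auto
    ultimately show ?thesis by linarith
  qed
  have lstar_le: "lstar \<le> lam"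
  proof -
    have "Max ((\<lambda>k. val (u' k) (S0 k)) ` {1..N}) \<le> lam"
    proof (subst Max_le_iff)
      show "\<forall>a\<in>(\<lambda>k. val (u' k) (S0 k)) ` {1..N}. a \<le> lam"
      proof
        fix a assume "a \<in> (\<lambda>k. val (u' k) (S0 k)) ` {1..N}"
        then obtain k where k: "k \<in> {1..N}" and a: "a = val (u' k) (S0 k)" by blast
        show "a \<le> lam"
        proof (cases "c k > 0")
          case True
          have "val (u' k) (S0 k) = val (\<lambda>j. - d k j) (S0 k) / c k"
            unfolding u'_def val_def using True by (simp add: sum_divide_distrib)
          moreover have "lam * MmS (d k) N M \<le> val (d k) (S0 k)"
            using S0 k unfolding solves_maxmin_def by blast
          moreover have "m k \<le> c k" using c_bounds k unfolding m_def by blast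
          moreover have "m k \<ge> 0" using m_nonneg[OF k] .
          ultimately have "val (\<lambda>j. - d k j) (S0 k) \<le> lam * c k"
            using MmS_ge[OF k] val_neg[of "d k" "S0 k"] lam
              mult_left_mono[of "- m k" "MmS (d k) N M" lam] mult_left_mono[of "m k" "c k" lam]
            by linarith
          then show ?thesis using a True \<open>val (u' k) (S0 k) = _\<close> by (simp add: divide_le_eq)
        next
          case False
          then show ?thesis using a lam unfolding u'_def val_def by simp
        qed
      qed
    qed (use finI neI in auto)
    moreover have "lstar \<le> Max ((\<lambda>k. val (u' k) (S0 k)) ` {1..N})"
      unfolding lstar_def using finP S0p by (intro Min_le) auto
    ultimately show ?thesis by linarith
  qed
  show ?thesis
    unfolding solves_maxmin_def
  proof (intro conjI Seps_part ballI)
    fix i assume i: "i \<in> {1..N}"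
    have cb: "m i \<le> c i" "c i \<le> \<alpha> * m i" using c_bounds i unfolding m_def by auto
    have bnd: "val (u' i) (Seps i) \<le> \<beta> * lstar"
      using Seps_bound i unfolding u'_def lstar_def by blast
    have "val (\<lambda>j. - d i j) (Seps i) \<le> (1 + eps) * lam * m i"
    proof (cases "c i > 0")
      case True
      have eq: "val (u' i) (Seps i) = val (\<lambda>j. - d i j) (Seps i) / c i"
        unfolding u'_def val_def using True by (simp add: sum_divide_distrib)
      have "val (\<lambda>j. - d i j) (Seps i) / c i \<le> \<beta> * lam"
        using bnd eq lstar_le beta by (smt (verit) mult_left_mono)
      hence h1: "val (\<lambda>j. - d i j) (Seps i) \<le> \<beta> * lam * c i" using True by (simp add: divide_le_eq)
      have "\<beta> * lam * c i \<le> \<beta> * lam * (\<alpha> * m i)"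
        using cb beta lam by (intro mult_left_mono) auto
      moreover have "m i \<ge> 0" using True cb alpha
        by (smt (verit) mult_nonneg_nonneg mult_le_0_iff)
      hence "\<beta> * lam * (\<alpha> * m i) \<le> (1 + eps) * lam * m i"
        using ab lam by (smt (verit) mult_right_mono mult_nonneg_nonneg mult.commute mult.left_commute)
      ultimately show ?thesis using h1 by linarith
    next
      case False
      have m0: "m i \<le> 0" using cb False by linarith
      have "m i \<in> (\<lambda>S. Max ((\<lambda>j. val (\<lambda>j. - d i j) (S j)) ` {1..N})) ` partitions N M"
        unfolding m_def mMS_def using finP neP by (intro Min_in) auto
      then obtain T where T: "T \<in> partitions N M" and mT: "m i = Max ((\<lambda>j. val (\<lambda>j. - d i j) (T j)) ` {1..N})"
        by blast
      have zero: "- d i x \<le> 0" if x: "x \<in> M" for x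
      proof -
        obtain k where k: "k \<in> {1..N}" and xk: "x \<in> T k"
          using T x unfolding partitions_def by blast
        have "- d i x \<le> val (\<lambda>j. - d i j) (T k)"
          unfolding val_def using finT[OF T k] xk nonpos i subM[OF T k]
          by (intro member_le_sum) auto
        also have "\<dots> \<le> m i" unfolding mT using k finI by (intro Max_ge) auto
        finally show ?thesis using m0 by linarith
      qed
      have "val (\<lambda>j. - d i j) (Seps i) \<le> 0"
        unfolding val_def using zero subM[OF Seps_part i] by (intro sum_nonpos) auto
      moreover have "m i \<ge> 0"
      proof -
        have "val (\<lambda>j. - d i j) (T 1) \<le> m i" unfolding mT using N1 finI by (intro Max_ge) auto
        moreover have "val (\<lambda>j. - d i j) (T 1) \<ge> 0" using uS_nonneg[OF i subM[OF T]] N1 by auto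
        ultimately show ?thesis by linarith
      qed
      ultimately show ?thesis using m0 by simp
    qed
    moreover have "(1 + eps) * lam * MmS (d i) N M \<le> (1 + eps) * lam * (- m i)"
      using MmS_le[OF i] eps lam by (intro mult_left_mono) auto
    ultimately show "(1 + eps) * lam * MmS (d i) N M \<le> val (d i) (Seps i)"
      using val_neg[of "d i" "Seps i"] by linarith
  qed
qed

end
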